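(* Let $\mathbb{H}$ be a finite set and $\mathcal{H}=(H_e)_{e\in E(\mathbb{Z}^d)}$ a collection of subsets of $\mathbb{H}^2$. Let $S\subset\mathbb{Z}^d$ be finite and even, let $\{\mathbb{H}_u\}_{u\in\partial_\bullet S}$ be subsets of $\mathbb{H}$, and let $\mathcal{F}\subset\mathrm{Hom}_{S,\mathcal{H}}$ be such that $F(u)\in\mathbb{H}_u$ for every $F\in\mathcal{F}$ and $u\in\partial_\bullet S$. Let $F$ be a uniformly random element of $\mathcal{F}$, and for each odd $v\in S$ let $X_v$ be a random variable measurable with respect to $F|_{N(v)}$. Then \[ |\mathcal{F}|\le\prod_{v\in S\text{ odd}}\ \prod_x\left(\frac{Z^{\mathcal{H}}_v(\Psi_{v,x},I_{v,x})}{\mathbb{P}(X_v=x)}\right)^{\mathbb{P}(X_v=x)/2d}\cdot\prod_{u\in\partial_\bullet S}|\mathbb{H}_u|^{\frac1{2d}|\partial u\cap\partial S|}, \] where the inner product is over $x$ in the support of $X_v$, and $\Psi_{v,x}$, $I_{v,x}$ are the supports of $F|_{N(v)}$ and $F(v)$ on the event $\{X_v=x\}$.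
   Context: $\mathbb{Z}^d$ with nearest-neighbour edges $E(\mathbb{Z}^d)$; even/odd vertices by parity of coordinate sum; $N(v)$ the neighbours of $v$; $\partial_\bullet S$ the vertices of $S$ with a neighbour outside $S$; $S$ is even if $\partial_\bullet S$ consists only of even vertices; $\partial u$ the edges incident to $u$; $\partial S$ the edges with exactly one endpoint in $S$. $\mathrm{Hom}_{S,\mathcal{H}}$ is the set of $F:S\to\mathbb{H}$ with $(F(v),F(u))\in H_{\{v,u\}}$ whenever $v\in S$ is odd and $u\sim v$. For an edge $e$ and $h\in\mathbb{H}$, $H_{e,h}=\{h'\in\mathbb{H}:(h',h)\in H_e\}$; for odd $v$ and $\psi:N(v)\to\mathbb{H}$, $H_{v,\psi}=\bigcap_{u\sim v}H_{\{v,u\},\psi(u)}$; for a set $\Psi$ of such $\psi$ and $I\subset\mathbb{H}$, $Z^{\mathcal{H}}_v(\Psi,I)=\sum_{\psi\in\Psi}|H_{v,\psi}\cap I|^{2d}$. *)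

theory Defs
  imports "HOL-Analysis.Analysis"
begin

text \<open>Vertices of Z^d are elements of int ^ 'n, with d = CARD('n).\<close>

definition adj :: "int ^ 'n \<Rightarrow> int ^ 'n \<Rightarrow> bool" where
  "adj u v \<longleftrightarrow> (\<Sum>i\<in>UNIV. \<bar>u $ i - v $ i\<bar>) = 1"

definition nbrs :: "int ^ 'n \<Rightarrow> (int ^ 'n) set" where
  "nbrs v = {u. adj v u}"

definition even_vtx :: "int ^ 'n \<Rightarrow> bool" where
  "even_vtx v \<longleftrightarrow> even (\<Sum>i\<in>UNIV. v $ i)"

definition odd_vtx :: "int ^ 'n \<Rightarrow> bool" where
  "odd_vtx v \<longleftrightarrow> odd (\<Sum>i\<in>UNIV. v $ i)"

definition inner_bd :: "(int ^ 'n) set \<Rightarrow> (int ^ 'n) set" where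
  "inner_bd S = {v \<in> S. \<exists>u. adj v u \<and> u \<notin> S}"

definition even_set :: "(int ^ 'n) set \<Rightarrow> bool" where
  "even_set S \<longleftrightarrow> (\<forall>v \<in> inner_bd S. even_vtx v)"

definition edge_bd :: "(int ^ 'n) set \<Rightarrow> (int ^ 'n) set set" where
  "edge_bd S = {{u, w} | u w. adj u w \<and> u \<in> S \<and> w \<notin> S}"

definition inc_edges :: "int ^ 'n \<Rightarrow> (int ^ 'n) set set" where
  "inc_edges u = {{u, w} | w. adj u w}"

definition Hom :: "'h set \<Rightarrow> ((int ^ 'n) set \<Rightarrow> ('h \<times> 'h) set) \<Rightarrow> (int ^ 'n) set
    \<Rightarrow> (int ^ 'n \<Rightarrow> 'h) set" where
  "Hom Hs H S = {F \<in> S \<rightarrow>\<^sub>E Hs. \<forall>v \<in> S. odd_vtx v \<longrightarrow>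
      (\<forall>u. adj v u \<longrightarrow> (F v, F u) \<in> H {v, u})}"

definition H_edge :: "'h set \<Rightarrow> ((int ^ 'n) set \<Rightarrow> ('h \<times> 'h) set) \<Rightarrow> (int ^ 'n) set \<Rightarrow> 'h \<Rightarrow> 'h set" where
  "H_edge Hs H e h = {h' \<in> Hs. (h', h) \<in> H e}"

definition H_vtx :: "'h set \<Rightarrow> ((int ^ 'n) set \<Rightarrow> ('h \<times> 'h) set) \<Rightarrow> int ^ 'n \<Rightarrow> (int ^ 'n \<Rightarrow> 'h) \<Rightarrow> 'h set" where
  "H_vtx Hs H v \<psi> = (\<Inter>u \<in> nbrs v. H_edge Hs H {v, u} (\<psi> u))"

definition Zv :: "'h set \<Rightarrow> ((int ^ 'n) set \<Rightarrow> ('h \<times> 'h) set) \<Rightarrow> int ^ 'n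
    \<Rightarrow> (int ^ 'n \<Rightarrow> 'h) set \<Rightarrow> 'h set \<Rightarrow> nat" where
  "Zv Hs H v \<Psi> I = (\<Sum>\<psi> \<in> \<Psi>. card (H_vtx Hs H v \<psi> \<inter> I) ^ (2 * CARD('n)))"

text \<open>X v \<psi> is the value of X_v as a function of the restriction \<psi> = F|_{N(v)}.
  Probabilities are w.r.t. the uniform measure on the finite set FF.\<close>
definition probX :: "(int ^ 'n \<Rightarrow> 'h) set \<Rightarrow> (int ^ 'n \<Rightarrow> (int ^ 'n \<Rightarrow> 'h) \<Rightarrow> 'x)
    \<Rightarrow> int ^ 'n \<Rightarrow> 'x \<Rightarrow> real" where
  "probX FF X v x = real (card {F \<in> FF. X v (restrict F (nbrs v)) = x}) / real (card FF)"

definition PsiX :: "(int ^ 'n \<Rightarrow> 'h) set \<Rightarrow> (int ^ 'n \<Rightarrow> (int ^ 'n \<Rightarrow> 'h) \<Rightarrow> 'x)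
    \<Rightarrow> int ^ 'n \<Rightarrow> 'x \<Rightarrow> (int ^ 'n \<Rightarrow> 'h) set" where
  "PsiX FF X v x = {restrict F (nbrs v) | F. F \<in> FF \<and> X v (restrict F (nbrs v)) = x}"

definition IX :: "(int ^ 'n \<Rightarrow> 'h) set \<Rightarrow> (int ^ 'n \<Rightarrow> (int ^ 'n \<Rightarrow> 'h) \<Rightarrow> 'x)
    \<Rightarrow> int ^ 'n \<Rightarrow> 'x \<Rightarrow> 'h set" where
  "IX FF X v x = {F v | F. F \<in> FF \<and> X v (restrict F (nbrs v)) = x}"

end

theory Submission
  imports Defs
begin

definition cls :: "'a set \<Rightarrow> ('a \<Rightarrow> 'b) \<Rightarrow> 'a \<Rightarrow> real" where
  "cls \<Omega> f w = real (card {w' \<in> \<Omega>. f w' = f w})"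

lemma cls_ge1: "finite \<Omega> \<Longrightarrow> w \<in> \<Omega> \<Longrightarrow> cls \<Omega> f w \<ge> 1"
proof -
  assume a: "finite \<Omega>" "w \<in> \<Omega>"
  hence "card {w' \<in> \<Omega>. f w' = f w} > 0" by (auto simp: card_gt_0_iff)
  thus ?thesis unfolding cls_def by simp
qed

lemma cls_pos: "finite \<Omega> \<Longrightarrow> w \<in> \<Omega> \<Longrightarrow> cls \<Omega> f w > 0"
  using cls_ge1[of \<Omega> w f] by linarith

lemma ln_sum_le0:
  assumes "finite \<Omega>" "\<forall>w\<in>\<Omega>. r w > 0" "(\<Sum>w\<in>\<Omega>. r w) \<le> real (card \<Omega>)"
  shows "(\<Sum>w\<in>\<Omega>. ln (r w)) \<le> 0"
proof -
  have "(\<Sum>w\<in>\<Omega>. ln (r w)) \<le> (\<Sum>w\<in>\<Omega>. r w - 1)"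
    by (rule sum_mono) (use assms in \<open>auto intro: ln_le_minus_one\<close>)
  also have "\<dots> = (\<Sum>w\<in>\<Omega>. r w) - real (card \<Omega>)" by (simp add: sum_subtractf)
  finally show ?thesis using assms by simp
qed

lemma sum_over_classes:
  assumes "finite \<Omega>"
  shows "(\<Sum>w\<in>\<Omega>. G (f w) / cls \<Omega> f w) = (\<Sum>y\<in>f ` \<Omega>. G y)"
proof -
  have "(\<Sum>w\<in>\<Omega>. G (f w) / cls \<Omega> f w) =
     (\<Sum>y\<in>f ` \<Omega>. \<Sum>w\<in>{w\<in>\<Omega>. f w = y}. G (f w) / cls \<Omega> f w)"
    by (rule sum.image_gen[OF assms])
  also have "\<dots> = (\<Sum>y\<in>f ` \<Omega>. G y)"
  proof (rule sum.cong[OF refl])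
    fix y assume "y \<in> f ` \<Omega>"
    then obtain w0 where w0: "w0 \<in> \<Omega>" "f w0 = y" by auto
    have "(\<Sum>w\<in>{w\<in>\<Omega>. f w = y}. G (f w) / cls \<Omega> f w)
        = (\<Sum>w\<in>{w\<in>\<Omega>. f w = y}. G y / real (card {w\<in>\<Omega>. f w = y}))"
      by (rule sum.cong) (auto simp: cls_def)
    also have "\<dots> = G y"
    proof -
      have "card {w\<in>\<Omega>. f w = y} > 0" using w0 assms by (auto simp: card_gt_0_iff)
      thus ?thesis by simp
    qed
    finally show "(\<Sum>w\<in>{w\<in>\<Omega>. f w = y}. G (f w) / cls \<Omega> f w) = G y" .
  qed
  finally show ?thesis .
qed

lemma sum_card_classes:
  assumes "finite \<Omega>"
  shows "(\<Sum>y\<in>f ` \<Omega>. real (card {w\<in>\<Omega>. f w = y})) = real (card \<Omega>)"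
proof -
  have "real (card \<Omega>) = (\<Sum>w\<in>\<Omega>. 1)" by simp
  also have "\<dots> = (\<Sum>y\<in>f ` \<Omega>. \<Sum>w\<in>{w\<in>\<Omega>. f w = y}. 1)"
    by (rule sum.image_gen[OF assms])
  finally show ?thesis by simp
qed

lemma CG:
  assumes fin: "finite \<Omega>"
    and qpos: "\<forall>\<tau>\<in>t ` \<Omega>. q \<tau> > 0"
    and qsum: "\<forall>y\<in>\<phi> ` t ` \<Omega>. (\<Sum>\<tau>\<in>{\<tau>\<in>t ` \<Omega>. \<phi> \<tau> = y}. q \<tau>) \<le> 1"
  shows "(\<Sum>w\<in>\<Omega>. ln (q (t w) * cls \<Omega> (\<lambda>w. \<phi> (t w)) w / cls \<Omega> t w)) \<le> 0"
proof (rule ln_sum_le0[OF fin])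
  define C where "C y = real (card {w\<in>\<Omega>. \<phi> (t w) = y})" for y
  have clsC: "cls \<Omega> (\<lambda>w. \<phi> (t w)) w = C (\<phi> (t w))" for w
    by (simp add: cls_def C_def)
  show "\<forall>w\<in>\<Omega>. q (t w) * cls \<Omega> (\<lambda>w. \<phi> (t w)) w / cls \<Omega> t w > 0"
    using qpos by (auto intro!: mult_pos_pos divide_pos_pos cls_pos[OF fin])
  have "(\<Sum>w\<in>\<Omega>. q (t w) * cls \<Omega> (\<lambda>w. \<phi> (t w)) w / cls \<Omega> t w)
      = (\<Sum>w\<in>\<Omega>. (q (t w) * C (\<phi> (t w))) / cls \<Omega> t w)" by (simp add: clsC)
  also have "\<dots> = (\<Sum>\<tau>\<in>t ` \<Omega>. q \<tau> * C (\<phi> \<tau>))"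
    by (rule sum_over_classes[OF fin, where G = "\<lambda>\<tau>. q \<tau> * C (\<phi> \<tau>)"])
  also have "\<dots> = (\<Sum>y\<in>\<phi> ` t ` \<Omega>. \<Sum>\<tau>\<in>{\<tau>\<in>t ` \<Omega>. \<phi> \<tau> = y}. q \<tau> * C (\<phi> \<tau>))"
    by (rule sum.image_gen) (use fin in auto)
  also have "\<dots> = (\<Sum>y\<in>\<phi> ` t ` \<Omega>. C y * (\<Sum>\<tau>\<in>{\<tau>\<in>t ` \<Omega>. \<phi> \<tau> = y}. q \<tau>))"
    by (rule sum.cong[OF refl]) (auto simp: sum_distrib_left mult.commute intro!: sum.cong)
  also have "\<dots> \<le> (\<Sum>y\<in>\<phi> ` t ` \<Omega>. C y)"
    by (rule sum_mono) (use qsum in \<open>auto simp: C_def intro!: mult_left_le\<close>)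
  also have "\<dots> = real (card \<Omega>)"
    using sum_card_classes[OF fin, of "\<lambda>w. \<phi> (t w)"] by (simp add: C_def image_image)
  finally show "(\<Sum>w\<in>\<Omega>. q (t w) * cls \<Omega> (\<lambda>w. \<phi> (t w)) w / cls \<Omega> t w) \<le> real (card \<Omega>)" .
qed

lemma part_card:
  assumes "finite T" "T \<subseteq> \<Omega>" "\<forall>F\<in>\<Omega>. \<forall>G\<in>T. g F = g G \<longrightarrow> F \<in> T"
  shows "(\<Sum>\<alpha>\<in>g ` T. real (card {F\<in>\<Omega>. g F = \<alpha>})) = real (card T)"
proof -
  have "(\<Sum>\<alpha>\<in>g ` T. real (card {F\<in>\<Omega>. g F = \<alpha>})) = (\<Sum>\<alpha>\<in>g ` T. real (card {F\<in>T. g F = \<alpha>}))"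
  proof (rule sum.cong[OF refl])
    fix \<alpha> assume "\<alpha> \<in> g ` T"
    then have "{F\<in>\<Omega>. g F = \<alpha>} = {F\<in>T. g F = \<alpha>}" using assms(2,3) by auto
    thus "real (card {F\<in>\<Omega>. g F = \<alpha>}) = real (card {F\<in>T. g F = \<alpha>})" by simp
  qed
  also have "\<dots> = real (card T)" by (rule sum_card_classes[OF assms(1)])
  finally show ?thesis .
qed

definition hh :: "('v \<Rightarrow> 'h) set \<Rightarrow> 'v set \<Rightarrow> real" where
  "hh \<Omega> A = (\<Sum>F\<in>\<Omega>. ln (real (card \<Omega>) / cls \<Omega> (\<lambda>F. restrict F A) F))"

lemma hh_empty: "hh \<Omega> {} = 0"
proof -
  have "cls \<Omega> (\<lambda>F. restrict F {}) F = real (card \<Omega>)" for F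
    by (simp add: cls_def restrict_def)
  moreover have "card \<Omega> > 0 \<or> \<Omega> = {} \<or> infinite \<Omega>" by auto
  ultimately show ?thesis unfolding hh_def by auto
qed

lemma restrict_restrict_sub: "B \<subseteq> A \<Longrightarrow> restrict (restrict F A) B = restrict F B"
  by (auto simp: restrict_def fun_eq_iff)

lemma restrict_Un_eq: "(restrict F (A \<union> B) = restrict G (A \<union> B)) \<longleftrightarrow>
   (restrict F A = restrict G A \<and> restrict F B = restrict G B)"
  by (auto simp: restrict_def fun_eq_iff)

lemma hh_submod:
  assumes fin: "finite \<Omega>"
  shows "hh \<Omega> (A \<union> B) + hh \<Omega> (A \<inter> B) \<le> hh \<Omega> A + hh \<Omega> B"
proof -
  define N where "N = real (card \<Omega>)"
  define cA where "cA \<alpha> = real (card {F\<in>\<Omega>. restrict F A = \<alpha>})" for \<alpha>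
  define cB where "cB \<beta> = real (card {F\<in>\<Omega>. restrict F B = \<beta>})" for \<beta>
  define cI where "cI \<gamma> = real (card {F\<in>\<Omega>. restrict F (A \<inter> B) = \<gamma>})" for \<gamma>
  define t where "t F = (restrict F A, restrict F B)" for F :: "'a \<Rightarrow> 'b"
  define \<phi> where "\<phi> \<tau> = restrict (fst \<tau>) (A \<inter> B)" for \<tau> :: "('a \<Rightarrow> 'b) \<times> ('a \<Rightarrow> 'b)"
  define q where "q \<tau> = cA (fst \<tau>) * cB (snd \<tau>) / (cI (\<phi> \<tau>))^2" for \<tau>
  have phit: "\<phi> (t F) = restrict F (A \<inter> B)" for F
    by (simp add: \<phi>_def t_def restrict_restrict_sub)
  have cpos: "cA (restrict F A) > 0" "cB (restrict F B) > 0" "cI (restrict F (A \<inter> B)) > 0" if "F \<in> \<Omega>" for F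
    using cls_pos[OF fin that] unfolding cls_def cA_def cB_def cI_def by auto
  have main: "(\<Sum>w\<in>\<Omega>. ln (q (t w) * cls \<Omega> (\<lambda>w. \<phi> (t w)) w / cls \<Omega> t w)) \<le> 0"
  proof (rule CG[OF fin])
    show "\<forall>\<tau>\<in>t ` \<Omega>. q \<tau> > 0"
      using cpos by (auto simp: q_def t_def phit[unfolded t_def] intro!: divide_pos_pos mult_pos_pos)
        (metis less_irrefl)
    show "\<forall>y\<in>\<phi> ` t ` \<Omega>. (\<Sum>\<tau>\<in>{\<tau>\<in>t ` \<Omega>. \<phi> \<tau> = y}. q \<tau>) \<le> 1"
    proof
      fix y assume "y \<in> \<phi> ` t ` \<Omega>"
      then obtain F0 where F0: "F0 \<in> \<Omega>" "y = restrict F0 (A \<inter> B)" using phit by auto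
      define T where "T = {F\<in>\<Omega>. restrict F (A \<inter> B) = y}"
      have finT: "finite T" using fin by (simp add: T_def)
      have F0T: "F0 \<in> T" using F0 by (simp add: T_def)
      have cIy: "cI y = real (card T)" by (simp add: cI_def T_def)
      have cTpos: "real (card T) > 0" using finT F0T by (auto simp: card_gt_0_iff)
      have sub: "{\<tau>\<in>t ` \<Omega>. \<phi> \<tau> = y} \<subseteq> (\<lambda>F. restrict F A) ` T \<times> (\<lambda>F. restrict F B) ` T"
        using phit by (auto simp: T_def t_def)
      have "(\<Sum>\<tau>\<in>{\<tau>\<in>t ` \<Omega>. \<phi> \<tau> = y}. q \<tau>)
          = (\<Sum>\<tau>\<in>{\<tau>\<in>t ` \<Omega>. \<phi> \<tau> = y}. cA (fst \<tau>) * cB (snd \<tau>) / (real (card T))^2)"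
        by (rule sum.cong) (auto simp: q_def cIy)
      also have "\<dots> \<le> (\<Sum>\<tau>\<in>(\<lambda>F. restrict F A) ` T \<times> (\<lambda>F. restrict F B) ` T. cA (fst \<tau>) * cB (snd \<tau>) / (real (card T))^2)"
        by (rule sum_mono2) (use finT sub in \<open>auto simp: cA_def cB_def\<close>)
      also have "\<dots> = (\<Sum>\<alpha>\<in>(\<lambda>F. restrict F A) ` T. cA \<alpha>) * (\<Sum>\<beta>\<in>(\<lambda>F. restrict F B) ` T. cB \<beta>) / (real (card T))^2"
        by (simp add: sum_divide_distrib[symmetric] sum_product sum.cartesian_product case_prod_beta')
      also have "(\<Sum>\<alpha>\<in>(\<lambda>F. restrict F A) ` T. cA \<alpha>) = real (card T)"
        unfolding cA_def
        by (rule part_card[OF finT]) (auto simp: T_def, metis restrict_restrict_sub inf_le1)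
      also have "(\<Sum>\<beta>\<in>(\<lambda>F. restrict F B) ` T. cB \<beta>) = real (card T)"
        unfolding cB_def
        by (rule part_card[OF finT]) (auto simp: T_def, metis restrict_restrict_sub inf_le2)
      finally show "(\<Sum>\<tau>\<in>{\<tau>\<in>t ` \<Omega>. \<phi> \<tau> = y}. q \<tau>) \<le> 1"
        using cTpos by (simp add: power2_eq_square)
    qed
  qed
  have eq: "ln (q (t w) * cls \<Omega> (\<lambda>w. \<phi> (t w)) w / cls \<Omega> t w)
      = ln (N / cls \<Omega> (\<lambda>F. restrict F (A \<union> B)) w) + ln (N / cls \<Omega> (\<lambda>F. restrict F (A \<inter> B)) w)
        - ln (N / cls \<Omega> (\<lambda>F. restrict F A) w) - ln (N / cls \<Omega> (\<lambda>F. restrict F B) w)"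
    if w: "w \<in> \<Omega>" for w
  proof -
    have Npos: "N > 0" using fin w by (auto simp: N_def card_gt_0_iff)
    have c1: "cls \<Omega> t w = cls \<Omega> (\<lambda>F. restrict F (A \<union> B)) w"
      unfolding cls_def t_def by (simp add: restrict_Un_eq)
    have c2: "cls \<Omega> (\<lambda>w. \<phi> (t w)) w = cI (restrict w (A \<inter> B))"
      unfolding cls_def cI_def phit by simp
    have c3: "cls \<Omega> (\<lambda>F. restrict F A) w = cA (restrict w A)" "cls \<Omega> (\<lambda>F. restrict F B) w = cB (restrict w B)"
      "cls \<Omega> (\<lambda>F. restrict F (A \<inter> B)) w = cI (restrict w (A \<inter> B))"
      unfolding cls_def cA_def cB_def cI_def by simp_all
    have qt: "q (t w) = cA (restrict w A) * cB (restrict w B) / (cI (restrict w (A \<inter> B)))^2"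
      by (simp add: q_def phit, simp add: t_def)
    have p1: "cls \<Omega> (\<lambda>F. restrict F (A \<union> B)) w > 0" using cls_pos[OF fin w] .
    show ?thesis using cpos[OF w] p1 Npos unfolding c1 c2 c3 qt
      by (simp add: ln_div ln_mult power2_eq_square)
  qed
  have "(\<Sum>w\<in>\<Omega>. ln (q (t w) * cls \<Omega> (\<lambda>w. \<phi> (t w)) w / cls \<Omega> t w))
     = hh \<Omega> (A \<union> B) + hh \<Omega> (A \<inter> B) - hh \<Omega> A - hh \<Omega> B"
    unfolding hh_def N_def[symmetric] by (simp add: eq sum.distrib sum_subtractf)
  with main show ?thesis by simp
qed

lemma adj_sym: "adj u w \<longleftrightarrow> adj w u"
  unfolding adj_def by (simp add: abs_minus_commute)

lemma adj_irrefl: "\<not> adj u u"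
  unfolding adj_def by simp

lemma odd_vtx_iff: "odd_vtx v \<longleftrightarrow> \<not> even_vtx v"
  unfolding odd_vtx_def even_vtx_def by simp

lemma even_sum_abs:
  fixes f :: "'a \<Rightarrow> int"
  shows "even (sum f A) \<longleftrightarrow> even (\<Sum>i\<in>A. \<bar>f i\<bar>)"
proof -
  have "even (\<Sum>i\<in>A. \<bar>f i\<bar> - f i)"
    by (rule dvd_sum) (auto simp: abs_if)
  hence "even ((\<Sum>i\<in>A. \<bar>f i\<bar>) - sum f A)" by (simp add: sum_subtractf)
  thus ?thesis by (metis dvd_add_right_iff diff_add_cancel)
qed

lemma adj_parity:
  fixes u w :: "int ^ 'n"
  assumes "adj u w"
  shows "even_vtx u \<longleftrightarrow> odd_vtx w"
proof -
  have "(\<Sum>i\<in>UNIV. \<bar>w $ i - u $ i\<bar>) = (\<Sum>i\<in>UNIV. \<bar>u $ i - w $ i\<bar>)"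
    by (rule sum.cong[OF refl]) (rule abs_minus_commute)
  hence "odd (\<Sum>i\<in>UNIV. \<bar>w $ i - u $ i\<bar>)"
    using assms unfolding adj_def by simp
  hence "odd (\<Sum>i\<in>UNIV. w $ i - u $ i)"
    using even_sum_abs[of "\<lambda>i. w $ i - u $ i" UNIV] by blast
  hence e: "odd ((\<Sum>i\<in>UNIV. w $ i) - (\<Sum>i\<in>UNIV. u $ i))" by (simp add: sum_subtractf)
  show ?thesis unfolding even_vtx_def odd_vtx_def
    using e by (auto simp: even_diff)
qed

definition unitv :: "'n \<Rightarrow> int \<Rightarrow> int ^ 'n::finite" where
  "unitv i s = (\<chi> j. if j = i then s else 0)"

lemma adj_unit:
  fixes u w :: "int ^ 'n"
  shows "adj u w \<longleftrightarrow> (\<exists>i s. (s = 1 \<or> s = -1) \<and> w = u + unitv i s)"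
proof
  assume a: "adj u w"
  define D where "D j = u $ j - w $ j" for j
  have s1: "(\<Sum>j\<in>UNIV. \<bar>D j\<bar>) = 1" using a by (simp add: adj_def D_def)
  obtain i where i: "D i \<noteq> 0"
    using s1 by (metis (no_types, lifting) abs_zero sum.neutral zero_neq_one)
  have split: "(\<Sum>j\<in>UNIV. \<bar>D j\<bar>) = \<bar>D i\<bar> + (\<Sum>j\<in>UNIV - {i}. \<bar>D j\<bar>)"
    by (simp add: sum.remove)
  have nn: "(\<Sum>j\<in>UNIV - {i}. \<bar>D j\<bar>) \<ge> 0" by (rule sum_nonneg) simp
  have "\<bar>D i\<bar> \<ge> 1" using i by linarith
  hence Di: "\<bar>D i\<bar> = 1" and rest: "(\<Sum>j\<in>UNIV - {i}. \<bar>D j\<bar>) = 0" using s1 split nn by linarith+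
  have z: "D j = 0" if "j \<noteq> i" for j
    using rest sum_nonneg_eq_0_iff[of "UNIV - {i}" "\<lambda>j. \<bar>D j\<bar>"] that by auto
  show "\<exists>i s. (s = 1 \<or> s = -1) \<and> w = u + unitv i s"
  proof (intro exI conjI)
    show "- D i = 1 \<or> - D i = -1" using Di by linarith
    show "w = u + unitv i (- D i)"
    proof -
      have "w $ j = u $ j" if "j \<noteq> i" for j using z[OF that] by (simp add: D_def)
      thus ?thesis by (auto simp: vec_eq_iff unitv_def D_def)
    qed
  qed
next
  assume "\<exists>i s. (s = 1 \<or> s = -1) \<and> w = u + unitv i s"
  then obtain i s where s: "s = 1 \<or> s = -1" and w: "w = u + unitv i s" by blast
  have "(\<Sum>j\<in>UNIV. \<bar>u $ j - w $ j\<bar>) = (\<Sum>j\<in>UNIV. if j = i then 1 else 0)"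
    by (rule sum.cong) (use s in \<open>auto simp: w unitv_def\<close>)
  also have "\<dots> = 1" by simp
  finally show "adj u w" by (simp add: adj_def)
qed

lemma nbrs_eq: "nbrs u = (\<lambda>(i, s). u + unitv i s) ` (UNIV \<times> {1, -1})"
  unfolding nbrs_def adj_unit by auto

lemma inj_unit: "inj_on (\<lambda>(i, s). u + unitv i s) (UNIV \<times> {1 :: int, -1})"
proof (rule inj_onI, clarify)
  fix i s i' s' assume s: "s \<in> {1::int, -1}" and s': "s' \<in> {1::int, -1}"
    and e: "u + unitv i s = u + unitv i' s'"
  hence "unitv i s = unitv i' s'" by simp
  hence "(unitv i s) $ i = (unitv i' s') $ i" by simp
  hence "s = (if i = i' then s' else 0)" by (simp add: unitv_def)
  thus "i = i' \<and> s = s'" using s by (auto split: if_splits)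
qed

lemma card_nbrs: "card (nbrs (u :: int ^ 'n)) = 2 * CARD('n)"
proof -
  have c: "card ((UNIV :: 'n set) \<times> {1 :: int, -1}) = 2 * CARD('n)" by (simp add: card_cartesian_product)
  have "card (nbrs u) = card ((UNIV :: 'n set) \<times> {1 :: int, -1})"
    unfolding nbrs_eq by (rule card_image[OF inj_unit[of u]])
  with c show ?thesis by simp
qed

lemma finite_nbrs: "finite (nbrs u)"
  unfolding nbrs_eq by simp

lemma single_bound:
  assumes fin: "finite FF" and ne: "FF \<noteq> {}" and finH: "finite (Hu :: 'h set)"
    and mem: "\<forall>F\<in>FF. F u \<in> Hu"
  shows "hh FF {u} \<le> real (card FF) * ln (real (card Hu))"
proof -
  define t where "t F = restrict F {u}" for F :: "'a \<Rightarrow> 'h"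
  define q where "q (\<tau> :: 'a \<Rightarrow> 'h) = 1 / real (card Hu)" for \<tau>
  obtain F0 where F0: "F0 \<in> FF" using ne by auto
  have Cpos: "real (card Hu) > 0" using mem F0 finH by (auto simp: card_gt_0_iff)
  have Npos: "real (card FF) > 0" using fin ne by (auto simp: card_gt_0_iff)
  have R: "(\<Sum>w\<in>FF. ln (q (t w) * cls FF (\<lambda>w. (\<lambda>_. ()) (t w)) w / cls FF t w)) \<le> 0"
  proof (rule CG[OF fin])
    show "\<forall>\<tau>\<in>t ` FF. q \<tau> > 0" using Cpos by (simp add: q_def)
    show "\<forall>y\<in>(\<lambda>_. ()) ` t ` FF. (\<Sum>\<tau>\<in>{\<tau>\<in>t ` FF. (\<lambda>_. ()) \<tau> = y}. q \<tau>) \<le> 1"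
    proof
      fix y :: unit
      have "card (t ` FF) \<le> card Hu"
      proof (rule card_inj_on_le[of "\<lambda>\<tau>. \<tau> u"])
        show "inj_on (\<lambda>\<tau>. \<tau> u) (t ` FF)"
          by (rule inj_onI) (auto simp: t_def restrict_def fun_eq_iff)
        show "(\<lambda>\<tau>. \<tau> u) ` t ` FF \<subseteq> Hu" using mem by (auto simp: t_def)
      qed (rule finH)
      hence "real (card (t ` FF)) / real (card Hu) \<le> 1" using Cpos by simp
      thus "(\<Sum>\<tau>\<in>{\<tau>\<in>t ` FF. (\<lambda>_. ()) \<tau> = y}. q \<tau>) \<le> 1" by (simp add: q_def)
    qed
  qed
  have "(\<Sum>w\<in>FF. ln (q (t w) * cls FF (\<lambda>w. (\<lambda>_. ()) (t w)) w / cls FF t w))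
      = hh FF {u} - real (card FF) * ln (real (card Hu))"
  proof -
    have "ln (q (t w) * cls FF (\<lambda>w. (\<lambda>_. ()) (t w)) w / cls FF t w)
        = ln (real (card FF) / cls FF (\<lambda>F. restrict F {u}) w) - ln (real (card Hu))" if "w \<in> FF" for w
    proof -
      have c1: "cls FF (\<lambda>w. (\<lambda>_. ()) (t w)) w = real (card FF)" by (simp add: cls_def)
      have c2: "cls FF t w > 0" using cls_pos[OF fin that] .
      show ?thesis using c2 Cpos Npos
        by (simp add: c1 q_def t_def[abs_def] ln_div ln_mult)
    qed
    thus ?thesis by (simp add: hh_def sum_subtractf)
  qed
  with R show ?thesis by simp
qed

lemma local_bound:
  fixes Hs :: "'h set"
    and H :: "(int ^ 'n) set \<Rightarrow> ('h \<times> 'h) set"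
    and S :: "(int ^ 'n) set"
    and FF :: "(int ^ 'n \<Rightarrow> 'h) set"
    and X :: "int ^ 'n \<Rightarrow> (int ^ 'n \<Rightarrow> 'h) \<Rightarrow> 'x"
  assumes fin: "finite FF" and ne: "FF \<noteq> {}" and finHs: "finite Hs"
    and hom: "FF \<subseteq> Hom Hs H S" and vS: "v \<in> S" and vodd: "odd_vtx v"
    and nbS: "nbrs v \<subseteq> S"
  shows "hh FF (nbrs v) + 2 * real CARD('n) * (hh FF (insert v (nbrs v)) - hh FF (nbrs v))
    \<le> real (card FF) * (\<Sum>x\<in>{x. probX FF X v x > 0}.
          probX FF X v x * ln (real (Zv Hs H v (PsiX FF X v x) (IX FF X v x)) / probX FF X v x))"
proof -
  define d where "d = CARD('n)"
  define N where "N = real (card FF)"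
  define \<psi> where "\<psi> F = restrict F (nbrs v)" for F :: "int ^ 'n \<Rightarrow> 'h"
  define k where "k \<psi>' = real (card (H_vtx Hs H v \<psi>' \<inter> IX FF X v (X v \<psi>')))" for \<psi>'
  define Z where "Z x = real (Zv Hs H v (PsiX FF X v x) (IX FF X v x))" for x
  have Npos: "N > 0" using fin ne by (auto simp: N_def card_gt_0_iff)
  have FHs: "F w \<in> Hs" if "F \<in> FF" "w \<in> S" for F w
    using hom that by (auto simp: Hom_def PiE_def)
  have IXsub: "IX FF X v x \<subseteq> Hs" for x using FHs vS by (auto simp: IX_def)
  have Fin_k: "F v \<in> H_vtx Hs H v (\<psi> F) \<inter> IX FF X v (X v (\<psi> F))" if F: "F \<in> FF" for F
  proof -
    have "F v \<in> H_vtx Hs H v (\<psi> F)"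
      unfolding H_vtx_def H_edge_def
    proof (clarsimp simp: FHs[OF F vS])
      fix u assume "u \<in> nbrs v"
      hence "adj v u" by (simp add: nbrs_def)
      hence "(F v, F u) \<in> H {v, u}" using hom F vS vodd by (auto simp: Hom_def)
      thus "(F v, \<psi> F u) \<in> H {v, u}" using \<open>u \<in> nbrs v\<close> by (simp add: \<psi>_def)
    qed
    moreover have "F v \<in> IX FF X v (X v (\<psi> F))" using F by (auto simp: IX_def \<psi>_def)
    ultimately show ?thesis by simp
  qed
  have kge: "k (\<psi> F) \<ge> 1" if F: "F \<in> FF" for F
  proof -
    have "finite (H_vtx Hs H v (\<psi> F) \<inter> IX FF X v (X v (\<psi> F)))"
      using finite_subset[OF IXsub finHs] by blast
    hence "card (H_vtx Hs H v (\<psi> F) \<inter> IX FF X v (X v (\<psi> F))) > 0"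
      using Fin_k[OF F] by (auto simp: card_gt_0_iff)
    thus ?thesis by (simp add: k_def)
  qed
  have PsiX_eq: "PsiX FF X v x = {\<psi>'\<in>\<psi> ` FF. X v \<psi>' = x}" for x
    by (auto simp: PsiX_def \<psi>_def)
  have Zeq: "Z x = (\<Sum>\<psi>'\<in>PsiX FF X v x. k \<psi>' ^ (2 * d))" for x
  proof -
    have "Z x = (\<Sum>\<psi>'\<in>PsiX FF X v x. real (card (H_vtx Hs H v \<psi>' \<inter> IX FF X v x)) ^ (2 * d))"
      by (simp add: Z_def Zv_def d_def)
    also have "\<dots> = (\<Sum>\<psi>'\<in>PsiX FF X v x. k \<psi>' ^ (2 * d))"
      by (rule sum.cong[OF refl]) (auto simp: k_def PsiX_eq)
    finally show ?thesis .
  qed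
  have finPsi: "finite (PsiX FF X v x)" for x using fin by (simp add: PsiX_eq)
  have Zge: "Z (X v (\<psi> F)) \<ge> k (\<psi> F) ^ (2 * d)" if F: "F \<in> FF" for F
  proof -
    have m: "\<psi> F \<in> PsiX FF X v (X v (\<psi> F))" using F by (simp add: PsiX_eq)
    show ?thesis unfolding Zeq
      by (rule member_le_sum[OF m _ finPsi]) (simp add: k_def)
  qed
  have kpow: "k (\<psi> F) ^ (2 * d) \<ge> 1" if "F \<in> FF" for F
    using kge[OF that] by simp
  have Zpos: "Z (X v (\<psi> F)) > 0" if "F \<in> FF" for F
    using Zge[OF that] kpow[OF that] by linarith
  define t1 where "t1 F = restrict F (insert v (nbrs v))" for F :: "int ^ 'n \<Rightarrow> 'h"
  define \<phi>1 where "\<phi>1 \<tau> = restrict \<tau> (nbrs v)" for \<tau> :: "int ^ 'n \<Rightarrow> 'h"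
  define q1 where "q1 \<tau> = 1 / k (\<phi>1 \<tau>)" for \<tau>
  have phit1: "\<phi>1 (t1 F) = \<psi> F" for F
  proof -
    have "insert v (nbrs v) \<inter> nbrs v = nbrs v" by blast
    thus ?thesis by (simp add: \<phi>1_def t1_def \<psi>_def)
  qed
  have R1: "(\<Sum>w\<in>FF. ln (q1 (t1 w) * cls FF (\<lambda>w. \<phi>1 (t1 w)) w / cls FF t1 w)) \<le> 0"
  proof (rule CG[OF fin])
    show "\<forall>\<tau>\<in>t1 ` FF. q1 \<tau> > 0" using kge by (auto simp: q1_def phit1) (meson less_le_trans zero_less_one)
    show "\<forall>y\<in>\<phi>1 ` t1 ` FF. (\<Sum>\<tau>\<in>{\<tau>\<in>t1 ` FF. \<phi>1 \<tau> = y}. q1 \<tau>) \<le> 1"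
    proof
      fix y assume "y \<in> \<phi>1 ` t1 ` FF"
      then obtain F0 where F0: "F0 \<in> FF" "y = \<psi> F0" using phit1 by auto
      let ?A = "H_vtx Hs H v y \<inter> IX FF X v (X v y)"
      have finA: "finite ?A" using finHs IXsub by (meson finite_Int finite_subset)
      have "card {\<tau>\<in>t1 ` FF. \<phi>1 \<tau> = y} \<le> card ?A"
      proof (rule card_inj_on_le[of "\<lambda>\<tau>. \<tau> v"])
        show "inj_on (\<lambda>\<tau>. \<tau> v) {\<tau>\<in>t1 ` FF. \<phi>1 \<tau> = y}"
        proof (rule inj_onI)
          fix a b assume a: "a \<in> {\<tau>\<in>t1 ` FF. \<phi>1 \<tau> = y}" and b: "b \<in> {\<tau>\<in>t1 ` FF. \<phi>1 \<tau> = y}"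
            and ev: "a v = b v"
          obtain F1 where F1: "a = t1 F1" using a by auto
          obtain F2 where F2: "b = t1 F2" using b by auto
          have e: "\<phi>1 a = \<phi>1 b" using a b by simp
          show "a = b"
          proof
            fix w
            show "a w = b w"
            proof (cases "w \<in> nbrs v")
              case True
              then show ?thesis using fun_cong[OF e, of w]
                by (simp add: \<phi>1_def)
            next
              case False
              then show ?thesis using ev unfolding F1 F2 by (cases "w = v") (auto simp: t1_def)
            qed
          qed
        qed
        show "(\<lambda>\<tau>. \<tau> v) ` {\<tau>\<in>t1 ` FF. \<phi>1 \<tau> = y} \<subseteq> ?A"
        proof
          fix z assume "z \<in> (\<lambda>\<tau>. \<tau> v) ` {\<tau>\<in>t1 ` FF. \<phi>1 \<tau> = y}"
          then obtain F where F: "F \<in> FF" and z: "z = t1 F v" and e: "\<phi>1 (t1 F) = y" by auto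
          from e have "y = \<psi> F" by (simp add: phit1)
          moreover have "t1 F v = F v" by (simp add: t1_def)
          ultimately show "z \<in> ?A" using Fin_k[OF F] z by simp
        qed
      qed (rule finA)
      moreover have "k y = real (card ?A)" by (simp add: k_def)
      moreover have "k y \<ge> 1" using kge F0 by simp
      ultimately have "real (card {\<tau>\<in>t1 ` FF. \<phi>1 \<tau> = y}) / k y \<le> 1" by simp
      moreover have "(\<Sum>\<tau>\<in>{\<tau>\<in>t1 ` FF. \<phi>1 \<tau> = y}. q1 \<tau>) = real (card {\<tau>\<in>t1 ` FF. \<phi>1 \<tau> = y}) / k y"
        by (simp add: q1_def)
      ultimately show "(\<Sum>\<tau>\<in>{\<tau>\<in>t1 ` FF. \<phi>1 \<tau> = y}. q1 \<tau>) \<le> 1" by simp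
    qed
  qed
  define q2 where "q2 \<psi>' = k \<psi>' ^ (2 * d) / Z (X v \<psi>')" for \<psi>'
  have R2: "(\<Sum>w\<in>FF. ln (q2 (\<psi> w) * cls FF (\<lambda>w. X v (\<psi> w)) w / cls FF \<psi> w)) \<le> 0"
  proof (rule CG[OF fin])
    show "\<forall>\<tau>\<in>\<psi> ` FF. q2 \<tau> > 0" using kpow Zpos by (auto simp: q2_def)
      (meson less_le_trans zero_less_one divide_pos_pos)
    show "\<forall>y\<in>X v ` \<psi> ` FF. (\<Sum>\<tau>\<in>{\<tau>\<in>\<psi> ` FF. X v \<tau> = y}. q2 \<tau>) \<le> 1"
    proof
      fix y assume "y \<in> X v ` \<psi> ` FF"
      then obtain F0 where F0: "F0 \<in> FF" "y = X v (\<psi> F0)" by auto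
      have "(\<Sum>\<tau>\<in>{\<tau>\<in>\<psi> ` FF. X v \<tau> = y}. q2 \<tau>) = (\<Sum>\<tau>\<in>PsiX FF X v y. k \<tau> ^ (2 * d) / Z y)"
        unfolding PsiX_eq by (rule sum.cong[OF refl]) (auto simp: q2_def)
      also have "\<dots> = (\<Sum>\<tau>\<in>PsiX FF X v y. k \<tau> ^ (2 * d)) / Z y"
        by (rule sum_divide_distrib[symmetric])
      also have "\<dots> = Z y / Z y" by (simp only: Zeq[symmetric])
      also have "\<dots> = 1" using Zpos[OF F0(1)] F0(2) by simp
      finally show "(\<Sum>\<tau>\<in>{\<tau>\<in>\<psi> ` FF. X v \<tau> = y}. q2 \<tau>) \<le> 1" by simp
    qed
  qed
  define T where "T F = ln (Z (X v (\<psi> F)) * N / cls FF (\<lambda>w. X v (\<psi> w)) F)" for F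
  have pt: "ln (N / cls FF \<psi> F) + 2 * real d * (ln (N / cls FF t1 F) - ln (N / cls FF \<psi> F))
      = T F + ln (q2 (\<psi> F) * cls FF (\<lambda>w. X v (\<psi> w)) F / cls FF \<psi> F)
        + 2 * real d * ln (q1 (t1 F) * cls FF (\<lambda>w. \<phi>1 (t1 w)) F / cls FF t1 F)"
    if F: "F \<in> FF" for F
  proof -
    have e1: "cls FF (\<lambda>w. \<phi>1 (t1 w)) F = cls FF \<psi> F" by (simp add: phit1)
    have a: "cls FF t1 F > 0" "cls FF \<psi> F > 0" "cls FF (\<lambda>w. X v (\<psi> w)) F > 0"
      using cls_pos[OF fin F] by auto
    have kk: "k (\<psi> F) > 0" using kge[OF F] by linarith
    have zz: "Z (X v (\<psi> F)) > 0" using Zpos[OF F] .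
    have l1: "ln (q1 (t1 F) * cls FF \<psi> F / cls FF t1 F) = ln (cls FF \<psi> F) - ln (k (\<psi> F)) - ln (cls FF t1 F)"
      using a kk by (simp add: q1_def phit1 ln_div ln_mult)
    have l2: "ln (q2 (\<psi> F) * cls FF (\<lambda>w. X v (\<psi> w)) F / cls FF \<psi> F)
       = real (2 * d) * ln (k (\<psi> F)) - ln (Z (X v (\<psi> F))) + ln (cls FF (\<lambda>w. X v (\<psi> w)) F) - ln (cls FF \<psi> F)"
      using a kk zz by (simp add: q2_def ln_div ln_mult ln_realpow)
    have l3: "T F = ln (Z (X v (\<psi> F))) + ln N - ln (cls FF (\<lambda>w. X v (\<psi> w)) F)"
      using a zz Npos by (simp add: T_def ln_div ln_mult)
    show ?thesis unfolding e1 l1 l2 l3 using a Npos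
      by (simp add: ln_div algebra_simps)
  qed
  have hh1: "hh FF (nbrs v) = (\<Sum>F\<in>FF. ln (N / cls FF \<psi> F))"
    by (simp add: hh_def N_def \<psi>_def[abs_def])
  have hh2: "hh FF (insert v (nbrs v)) = (\<Sum>F\<in>FF. ln (N / cls FF t1 F))"
    by (simp add: hh_def N_def t1_def[abs_def])
  have "hh FF (nbrs v) + 2 * real CARD('n) * (hh FF (insert v (nbrs v)) - hh FF (nbrs v))
     = (\<Sum>F\<in>FF. ln (N / cls FF \<psi> F) + 2 * real d * (ln (N / cls FF t1 F) - ln (N / cls FF \<psi> F)))"
    unfolding hh1 hh2 d_def by (simp add: sum.distrib sum_subtractf[symmetric] sum_distrib_left)
  also have "\<dots> = (\<Sum>F\<in>FF. T F) + (\<Sum>F\<in>FF. ln (q2 (\<psi> F) * cls FF (\<lambda>w. X v (\<psi> w)) F / cls FF \<psi> F))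
        + 2 * real d * (\<Sum>F\<in>FF. ln (q1 (t1 F) * cls FF (\<lambda>w. \<phi>1 (t1 w)) F / cls FF t1 F))"
    by (simp add: pt sum.distrib sum_distrib_left)
  also have "\<dots> \<le> (\<Sum>F\<in>FF. T F)"
    using R1 R2 by (simp add: mult_nonneg_nonpos add_nonpos_nonpos)
  also have "(\<Sum>F\<in>FF. T F) = real (card FF) * (\<Sum>x\<in>{x. probX FF X v x > 0}.
          probX FF X v x * ln (real (Zv Hs H v (PsiX FF X v x) (IX FF X v x)) / probX FF X v x))"
  proof -
    define xf where "xf F = X v (\<psi> F)" for F
    define c where "c x = real (card {F\<in>FF. xf F = x})" for x
    have prob: "probX FF X v x = c x / N" for x
      by (simp add: probX_def c_def N_def xf_def \<psi>_def)
    have supp: "{x. probX FF X v x > 0} = xf ` FF"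
    proof -
      have "probX FF X v x > 0 \<longleftrightarrow> c x > 0" for x using Npos by (simp add: prob zero_less_divide_iff)
      moreover have "c x > 0 \<longleftrightarrow> x \<in> xf ` FF" for x
        using fin by (auto simp: c_def card_gt_0_iff)
      ultimately show ?thesis by auto
    qed
    have "(\<Sum>F\<in>FF. T F) = (\<Sum>x\<in>xf ` FF. \<Sum>F\<in>{F\<in>FF. xf F = x}. T F)"
      by (rule sum.image_gen[OF fin])
    also have "\<dots> = (\<Sum>x\<in>xf ` FF. c x * ln (Z x * N / c x))"
    proof (rule sum.cong[OF refl])
      fix x assume "x \<in> xf ` FF"
      have "(\<Sum>F\<in>{F\<in>FF. xf F = x}. T F) = (\<Sum>F\<in>{F\<in>FF. xf F = x}. ln (Z x * N / c x))"
        by (rule sum.cong[OF refl]) (auto simp: T_def cls_def c_def xf_def)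
      thus "(\<Sum>F\<in>{F\<in>FF. xf F = x}. T F) = c x * ln (Z x * N / c x)"
        by (simp add: c_def)
    qed
    also have "\<dots> = (\<Sum>x\<in>xf ` FF. N * (probX FF X v x * ln (Z x / probX FF X v x)))"
    proof (rule sum.cong[OF refl])
      fix x assume "x \<in> xf ` FF"
      hence cp: "c x > 0" using fin by (auto simp: c_def card_gt_0_iff)
      show "c x * ln (Z x * N / c x) = N * (probX FF X v x * ln (Z x / probX FF X v x))"
      proof -
        have e: "Z x / (c x / N) = Z x * N / c x" by simp
        show ?thesis unfolding prob e using Npos by simp
      qed
    qed
    finally show ?thesis by (simp add: supp sum_distrib_left Z_def N_def)
  qed
  finally show ?thesis .
qed

lemma Fin_k_gen:
  assumes hom: "FF \<subseteq> Hom Hs H S" and F: "F \<in> FF" and vS: "v \<in> S" and vodd: "odd_vtx v"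
  shows "F v \<in> H_vtx Hs H v (restrict F (nbrs v)) \<inter> IX FF X v (X v (restrict F (nbrs v)))"
proof -
  have FHs: "F v \<in> Hs" using hom F vS by (auto simp: Hom_def PiE_def)
  have "F v \<in> H_vtx Hs H v (restrict F (nbrs v))"
    unfolding H_vtx_def
  proof (rule INT_I)
    fix u assume u: "u \<in> nbrs v"
    hence "adj v u" by (simp add: nbrs_def)
    hence "(F v, F u) \<in> H {v, u}" using hom F vS vodd by (auto simp: Hom_def)
    thus "F v \<in> H_edge Hs H {v, u} (restrict F (nbrs v) u)" using u FHs by (simp add: H_edge_def)
  qed
  moreover have "F v \<in> IX FF X v (X v (restrict F (nbrs v)))" using F by (auto simp: IX_def)
  ultimately show ?thesis by simp
qed

lemma zv_pos:
  assumes fin: "finite FF" and finHs: "finite Hs" and hom: "FF \<subseteq> Hom Hs H S"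
    and vS: "v \<in> S" and vodd: "odd_vtx v" and p: "probX FF X v x > 0"
  shows "Zv Hs H v (PsiX FF X v x) (IX FF X v x) > 0"
proof -
  have "card {F \<in> FF. X v (restrict F (nbrs v)) = x} \<noteq> 0"
  proof
    assume "card {F \<in> FF. X v (restrict F (nbrs v)) = x} = 0"
    hence "probX FF X v x = 0" by (simp add: probX_def)
    with p show False by simp
  qed
  then obtain F where F: "F \<in> FF" and Fx: "X v (restrict F (nbrs v)) = x"
    by (metis (mono_tags, lifting) Collect_empty_eq card.empty)
  let ?p = "restrict F (nbrs v)"
  have pin: "?p \<in> PsiX FF X v x" using F Fx by (auto simp: PsiX_def)
  have finPsi: "finite (PsiX FF X v x)"
  proof -
    have "PsiX FF X v x \<subseteq> (\<lambda>F. restrict F (nbrs v)) ` FF" by (auto simp: PsiX_def)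
    thus ?thesis using fin finite_subset by blast
  qed
  have IXsub: "IX FF X v x \<subseteq> Hs" using hom vS by (auto simp: IX_def Hom_def PiE_def)
  have "card (H_vtx Hs H v ?p \<inter> IX FF X v x) > 0"
    using Fin_k_gen[OF hom F vS vodd, of X] Fx finite_subset[OF IXsub finHs]
    by (auto simp: card_gt_0_iff)
  hence "card (H_vtx Hs H v ?p \<inter> IX FF X v x) ^ (2 * CARD('a)) > 0" by simp
  also have "\<dots> \<le> Zv Hs H v (PsiX FF X v x) (IX FF X v x)"
    unfolding Zv_def by (rule member_le_sum[OF pin _ finPsi]) simp
  finally show ?thesis .
qed

lemma count_nbrs:
  fixes S :: "(int ^ 'n) set"
  assumes uS: "u \<in> S" and ue: "even_vtx u"
  shows "card {v \<in> {v\<in>S. odd_vtx v}. u \<in> nbrs v}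
     + (if u \<in> inner_bd S then card (inc_edges u \<inter> edge_bd S) else 0) = 2 * CARD('n)"
proof -
  have e1: "{v \<in> {v\<in>S. odd_vtx v}. u \<in> nbrs v} = {w\<in>S. adj u w}"
    using ue adj_parity[of u] by (auto simp: nbrs_def adj_sym)
  have split: "nbrs u = {w\<in>S. adj u w} \<union> {w. adj u w \<and> w \<notin> S}" by (auto simp: nbrs_def)
  have c: "card {w\<in>S. adj u w} + card {w. adj u w \<and> w \<notin> S} = 2 * CARD('n)"
  proof -
    have "card (nbrs u) = card {w\<in>S. adj u w} + card {w. adj u w \<and> w \<notin> S}"
      unfolding split
      by (rule card_Un_disjoint) (use finite_nbrs[of u] split in auto)
    thus ?thesis by (simp add: card_nbrs)
  qed
  show ?thesis
  proof (cases "u \<in> inner_bd S")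
    case False
    hence "{w. adj u w \<and> w \<notin> S} = {}" using uS by (auto simp: inner_bd_def)
    hence z: "card {w. adj u w \<and> w \<notin> S} = 0" by (simp only: card.empty)
    have "card {w\<in>S. adj u w} = 2 * CARD('n)" using c z by linarith
    thus ?thesis using False e1 by simp
  next
    case True
    have img: "inc_edges u \<inter> edge_bd S = (\<lambda>w. {u, w}) ` {w. adj u w \<and> w \<notin> S}"
    proof
      show "inc_edges u \<inter> edge_bd S \<subseteq> (\<lambda>w. {u, w}) ` {w. adj u w \<and> w \<notin> S}"
      proof
        fix e assume "e \<in> inc_edges u \<inter> edge_bd S"
        then obtain w u' w' where e: "e = {u, w}" "adj u w" "e = {u', w'}" "adj u' w'" "u' \<in> S" "w' \<notin> S"
          by (auto simp: inc_edges_def edge_bd_def)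
        hence "(u = u' \<and> w = w') \<or> (u = w' \<and> w = u')" by (auto simp: doubleton_eq_iff)
        thus "e \<in> (\<lambda>w. {u, w}) ` {w. adj u w \<and> w \<notin> S}" using e uS by auto
      qed
      show "(\<lambda>w. {u, w}) ` {w. adj u w \<and> w \<notin> S} \<subseteq> inc_edges u \<inter> edge_bd S"
        using uS by (auto simp: inc_edges_def edge_bd_def)
    qed
    have inj: "inj_on (\<lambda>w. {u, w}) {w. adj u w \<and> w \<notin> S}"
      by (rule inj_onI) (auto simp: doubleton_eq_iff)
    have "card (inc_edges u \<inter> edge_bd S) = card {w. adj u w \<and> w \<notin> S}"
      unfolding img by (rule card_image[OF inj])
    thus ?thesis using True c e1 by simp
  qed
qed

theorem lemma7p4:
  fixes Hs :: "'h set"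
    and H :: "(int ^ 'n) set \<Rightarrow> ('h \<times> 'h) set"
    and S :: "(int ^ 'n) set"
    and Hu :: "int ^ 'n \<Rightarrow> 'h set"
    and FF :: "(int ^ 'n \<Rightarrow> 'h) set"
    and X :: "int ^ 'n \<Rightarrow> (int ^ 'n \<Rightarrow> 'h) \<Rightarrow> 'x"
  assumes "finite Hs"
    and "finite S"
    and "even_set S"
    and "\<forall>u \<in> inner_bd S. Hu u \<subseteq> Hs"
    and "FF \<subseteq> Hom Hs H S"
    and "FF \<noteq> {}"
    and "\<forall>F \<in> FF. \<forall>u \<in> inner_bd S. F u \<in> Hu u"
  shows "real (card FF) \<le>
    (\<Prod>v \<in> {v \<in> S. odd_vtx v}. \<Prod>x \<in> {x. probX FF X v x > 0}.
        (real (Zv Hs H v (PsiX FF X v x) (IX FF X v x)) / probX FF X v x)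
          powr (probX FF X v x / (2 * real CARD('n))))
    * (\<Prod>u \<in> inner_bd S. real (card (Hu u))
          powr (real (card (inc_edges u \<inter> edge_bd S)) / (2 * real CARD('n))))"
proof -
  note finHs = assms(1) and finS = assms(2) and evS = assms(3) and HuHs = assms(4)
    and hom = assms(5) and ne = assms(6) and mem = assms(7)
  define D where "D = 2 * real CARD('n)"
  define N where "N = real (card FF)"
  define E where "E = {u\<in>S. even_vtx u}"
  define Od where "Od = {v\<in>S. odd_vtx v}"
  define bd where "bd = inner_bd S"
  define h where "h A = hh FF A" for A
  define b where "b u = real (card (inc_edges u \<inter> edge_bd S))" for u
  define Loc where "Loc v = (\<Sum>x\<in>{x. probX FF X v x > 0}.
          probX FF X v x * ln (real (Zv Hs H v (PsiX FF X v x) (IX FF X v x)) / probX FF X v x))" for v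
  have finFF: "finite FF"
  proof -
    have "FF \<subseteq> PiE S (\<lambda>_. Hs)" using hom by (auto simp: Hom_def)
    thus ?thesis using finite_PiE[OF finS, of "\<lambda>_. Hs"] finHs finite_subset by blast
  qed
  have Npos: "N > 0" using finFF ne by (auto simp: N_def card_gt_0_iff)
  have Dpos: "D > 0" by (simp add: D_def)
  have bdE: "bd \<subseteq> E" using evS by (auto simp: bd_def E_def even_set_def inner_bd_def)
  have finbd: "finite bd" using finS by (simp add: bd_def inner_bd_def)
  have finOd: "finite Od" using finS by (simp add: Od_def)
  have finE: "finite E" using finS by (simp add: E_def)
  have nbO: "nbrs v \<subseteq> E" if v: "v \<in> Od" for v
  proof
    fix w assume "w \<in> nbrs v"
    hence a: "adj v w" by (simp add: nbrs_def)
    have "w \<in> S"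
    proof (rule ccontr)
      assume "w \<notin> S"
      hence "v \<in> inner_bd S" using a v by (auto simp: inner_bd_def Od_def)
      hence "even_vtx v" using evS by (simp add: even_set_def)
      thus False using v by (simp add: Od_def odd_vtx_iff)
    qed
    moreover have "even_vtx w" using adj_parity[OF a] v by (simp add: Od_def odd_vtx_iff)
    ultimately show "w \<in> E" by (simp add: E_def)
  qed
  have OdE: "v \<notin> E" if "v \<in> Od" for v using that by (simp add: Od_def E_def odd_vtx_iff)
  have SEO: "S = E \<union> Od" by (auto simp: E_def Od_def odd_vtx_iff)
  have hS: "h S = N * ln N"
  proof -
    have "cls FF (\<lambda>F. restrict F S) F = 1" if F: "F \<in> FF" for F
    proof -
      have ext: "G \<in> extensional S" if "G \<in> FF" for G using hom that by (auto simp: Hom_def PiE_def)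
      have "{G \<in> FF. restrict G S = restrict F S} = {F}"
        using F ext by (auto simp: extensional_restrict)
      thus ?thesis by (simp add: cls_def)
    qed
    thus ?thesis by (simp add: h_def hh_def N_def)
  qed
  have oddpart: "finite O' \<Longrightarrow> O' \<subseteq> Od \<Longrightarrow>
      h (E \<union> O') - h E \<le> (\<Sum>v\<in>O'. h (insert v (nbrs v)) - h (nbrs v))" for O'
  proof (induction O' rule: finite_induct)
    case empty
    then show ?case by simp
  next
    case (insert v O')
    have vO: "v \<in> Od" using insert by simp
    have "h (insert v (nbrs v) \<union> (E \<union> O')) + h (insert v (nbrs v) \<inter> (E \<union> O'))
        \<le> h (insert v (nbrs v)) + h (E \<union> O')"
      unfolding h_def by (rule hh_submod[OF finFF])
    moreover have "insert v (nbrs v) \<union> (E \<union> O') = E \<union> insert v O'" using nbO[OF vO] by auto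
    moreover have "insert v (nbrs v) \<inter> (E \<union> O') = nbrs v" using nbO[OF vO] OdE[OF vO] insert by auto
    ultimately show ?case using insert by simp
  qed
  have stepb: "h S - h E \<le> (\<Sum>v\<in>Od. h (insert v (nbrs v)) - h (nbrs v))"
    using oddpart[OF finOd] SEO by simp
  have shearer: "finite E' \<Longrightarrow> E' \<subseteq> E \<Longrightarrow>
      D * h E' \<le> (\<Sum>v\<in>Od. h (nbrs v \<inter> E')) + (\<Sum>u\<in>bd \<inter> E'. b u * h {u})" for E'
  proof (induction E' rule: finite_induct)
    case empty
    then show ?case by (simp add: h_def hh_empty)
  next
    case (insert u E')
    have uE: "u \<in> E" using insert by simp
    define \<delta> where "\<delta> = h (insert u E') - h E'"
    have dv: "h (nbrs v \<inter> insert u E') - h (nbrs v \<inter> E') \<ge> (if u \<in> nbrs v then \<delta> else 0)" for v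
    proof (cases "u \<in> nbrs v")
      case True
      have "h ((nbrs v \<inter> insert u E') \<union> E') + h ((nbrs v \<inter> insert u E') \<inter> E')
          \<le> h (nbrs v \<inter> insert u E') + h E'"
        unfolding h_def by (rule hh_submod[OF finFF])
      moreover have "(nbrs v \<inter> insert u E') \<union> E' = insert u E'" using True by auto
      moreover have "(nbrs v \<inter> insert u E') \<inter> E' = nbrs v \<inter> E'" using insert by auto
      ultimately show ?thesis using True by (simp add: \<delta>_def)
    next
      case False
      hence "nbrs v \<inter> insert u E' = nbrs v \<inter> E'" by auto
      thus ?thesis using False by simp
    qed
    have du: "h {u} \<ge> \<delta>"
    proof -
      have "h ({u} \<union> E') + h ({u} \<inter> E') \<le> h {u} + h E'"
        unfolding h_def by (rule hh_submod[OF finFF])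
      moreover have "{u} \<inter> E' = {}" using insert by auto
      ultimately show ?thesis by (simp add: \<delta>_def h_def hh_empty)
    qed
    define cnt where "cnt = real (card {v \<in> Od. u \<in> nbrs v})"
    define bb where "bb = (if u \<in> bd then b u else 0)"
    have cn: "card {v \<in> Od. u \<in> nbrs v}
     + (if u \<in> bd then card (inc_edges u \<inter> edge_bd S) else 0) = 2 * CARD('n)"
      using count_nbrs[of u S] uE unfolding Od_def bd_def E_def by simp
    have cnt_eq: "cnt + bb = D"
    proof (cases "u \<in> bd")
      case True
      with cn have "card {v \<in> Od. u \<in> nbrs v} + card (inc_edges u \<inter> edge_bd S) = 2 * CARD('n)" by simp
      hence "real (card {v \<in> Od. u \<in> nbrs v} + card (inc_edges u \<inter> edge_bd S)) = real (2 * CARD('n))" by (rule arg_cong)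
      thus ?thesis using True by (simp add: cnt_def bb_def b_def D_def)
    next
      case False
      with cn have "card {v \<in> Od. u \<in> nbrs v} = 2 * CARD('n)" by simp
      hence "real (card {v \<in> Od. u \<in> nbrs v}) = real (2 * CARD('n))" by (rule arg_cong)
      thus ?thesis using False by (simp add: cnt_def bb_def b_def D_def)
    qed
    have bbnn: "bb \<ge> 0" by (simp add: bb_def b_def)
    have sumv: "(\<Sum>v\<in>Od. h (nbrs v \<inter> insert u E')) \<ge> (\<Sum>v\<in>Od. h (nbrs v \<inter> E')) + cnt * \<delta>"
    proof -
      have "(\<Sum>v\<in>Od. h (nbrs v \<inter> insert u E')) - (\<Sum>v\<in>Od. h (nbrs v \<inter> E'))
          = (\<Sum>v\<in>Od. h (nbrs v \<inter> insert u E') - h (nbrs v \<inter> E'))" by (simp add: sum_subtractf)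
      also have "\<dots> \<ge> (\<Sum>v\<in>Od. if u \<in> nbrs v then \<delta> else 0)" by (rule sum_mono) (rule dv)
      also have "(\<Sum>v\<in>Od. if u \<in> nbrs v then \<delta> else 0) = cnt * \<delta>"
        using finOd by (simp add: sum.If_cases cnt_def Int_def)
      finally show ?thesis by simp
    qed
    have sumb: "(\<Sum>u'\<in>bd \<inter> insert u E'. b u' * h {u'}) = (\<Sum>u'\<in>bd \<inter> E'. b u' * h {u'}) + bb * h {u}"
    proof (cases "u \<in> bd")
      case True
      hence "bd \<inter> insert u E' = insert u (bd \<inter> E')" by auto
      moreover have "u \<notin> bd \<inter> E'" using insert by auto
      ultimately show ?thesis using True finbd by (simp add: bb_def)
    next
      case False
      hence "bd \<inter> insert u E' = bd \<inter> E'" by auto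
      thus ?thesis using False by (simp add: bb_def)
    qed
    have IH: "D * h E' \<le> (\<Sum>v\<in>Od. h (nbrs v \<inter> E')) + (\<Sum>u\<in>bd \<inter> E'. b u * h {u})"
      using insert by simp
    have "D * h (insert u E') = D * h E' + (cnt + bb) * \<delta>"
      unfolding cnt_eq \<delta>_def by (simp add: algebra_simps)
    also have "\<dots> = D * h E' + cnt * \<delta> + bb * \<delta>" by (simp add: algebra_simps)
    also have "\<dots> \<le> D * h E' + cnt * \<delta> + bb * h {u}"
      using mult_left_mono[OF du bbnn] by simp
    finally show ?case using IH sumv sumb by simp
  qed
  have stepc: "D * h E \<le> (\<Sum>v\<in>Od. h (nbrs v)) + (\<Sum>u\<in>bd. b u * h {u})"
  proof -
    have "nbrs v \<inter> E = nbrs v" if "v \<in> Od" for v using nbO[OF that] by auto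
    hence "(\<Sum>v\<in>Od. h (nbrs v \<inter> E)) = (\<Sum>v\<in>Od. h (nbrs v))" by simp
    moreover have "bd \<inter> E = bd" using bdE by auto
    ultimately show ?thesis using shearer[OF finE] by simp
  qed
  have stepd: "h (nbrs v) + D * (h (insert v (nbrs v)) - h (nbrs v)) \<le> N * Loc v" if v: "v \<in> Od" for v
  proof -
    have nS: "nbrs v \<subseteq> S" using nbO[OF v] by (auto simp: E_def)
    have vS: "v \<in> S" and vo: "odd_vtx v" using v by (auto simp: Od_def)
    show ?thesis
      using local_bound[OF finFF ne finHs hom vS vo nS, of X]
      by (simp add: Od_def h_def D_def N_def Loc_def)
  qed
  have Hupos: "real (card (Hu u)) > 0" and finHu: "finite (Hu u)" if u: "u \<in> bd" for u
  proof -
    have "Hu u \<subseteq> Hs" using HuHs u by (simp add: bd_def)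
    thus fu: "finite (Hu u)" using finite_subset finHs by blast
    obtain F0 where "F0 \<in> FF" using ne by auto
    hence "F0 u \<in> Hu u" using mem u by (auto simp: bd_def)
    thus "real (card (Hu u)) > 0" using fu by (auto simp: card_gt_0_iff)
  qed
  have stepe: "h {u} \<le> N * ln (real (card (Hu u)))" if u: "u \<in> bd" for u
    using single_bound[OF finFF ne finHu[OF u], of u] mem u by (simp add: h_def N_def bd_def)
  define A where "A = (\<Sum>v\<in>Od. Loc v)"
  define B where "B = (\<Sum>u\<in>bd. b u * ln (real (card (Hu u))))"
  define Sg where "Sg = (\<Sum>v\<in>Od. h (insert v (nbrs v)) - h (nbrs v))"
  have comb: "D * (N * ln N) \<le> N * A + N * B"
  proof -
    have "N * ln N \<le> h E + Sg" using stepb hS unfolding Sg_def by linarith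
    hence "D * (N * ln N) \<le> D * (h E + Sg)" by (rule mult_left_mono) (use Dpos in simp)
    also have "\<dots> = D * h E + D * Sg" by (simp add: distrib_left)
    also have "\<dots> \<le> (\<Sum>v\<in>Od. h (nbrs v)) + (\<Sum>u\<in>bd. b u * h {u}) + D * Sg"
      using stepc by linarith
    also have "D * Sg = (\<Sum>v\<in>Od. D * (h (insert v (nbrs v)) - h (nbrs v)))"
      unfolding Sg_def by (rule sum_distrib_left)
    also have "(\<Sum>v\<in>Od. h (nbrs v)) + (\<Sum>u\<in>bd. b u * h {u}) + (\<Sum>v\<in>Od. D * (h (insert v (nbrs v)) - h (nbrs v)))
       = (\<Sum>v\<in>Od. h (nbrs v) + D * (h (insert v (nbrs v)) - h (nbrs v))) + (\<Sum>u\<in>bd. b u * h {u})"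
      by (simp add: sum.distrib)
    also have "\<dots> \<le> (\<Sum>v\<in>Od. N * Loc v) + (\<Sum>u\<in>bd. b u * (N * ln (real (card (Hu u)))))"
    proof (rule add_mono)
      show "(\<Sum>v\<in>Od. h (nbrs v) + D * (h (insert v (nbrs v)) - h (nbrs v))) \<le> (\<Sum>v\<in>Od. N * Loc v)"
        by (rule sum_mono) (rule stepd)
      show "(\<Sum>u\<in>bd. b u * h {u}) \<le> (\<Sum>u\<in>bd. b u * (N * ln (real (card (Hu u)))))"
        by (rule sum_mono, rule mult_left_mono) (auto intro: stepe simp: b_def)
    qed
    also have "\<dots> = N * A + N * B"
      unfolding A_def B_def by (simp add: sum_distrib_left mult.left_commute)
    finally show ?thesis .
  qed
  have lnN: "ln N \<le> A / D + B / D"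
  proof -
    have "N * (D * ln N) \<le> N * (A + B)" using comb by (simp add: distrib_left mult.left_commute)
    hence "D * ln N \<le> A + B" by (rule mult_left_le_imp_le) (use Npos in simp)
    hence "ln N \<le> (A + B) / D" using Dpos by (simp add: pos_le_divide_eq mult.commute)
    thus ?thesis by (simp add: add_divide_distrib)
  qed
  define g where "g v x = (real (Zv Hs H v (PsiX FF X v x) (IX FF X v x)) / probX FF X v x) powr (probX FF X v x / D)" for v x
  define inner where "inner v = (\<Prod>x \<in> {x. probX FF X v x > 0}. g v x)" for v
  define P1 where "P1 = (\<Prod>v \<in> Od. inner v)"
  define P2 where "P2 = (\<Prod>u \<in> bd. real (card (Hu u)) powr (b u / D))"
  have finX: "finite {x. probX FF X v x > 0}" for v
  proof -
    have "{x. probX FF X v x > 0} \<subseteq> (\<lambda>F. X v (restrict F (nbrs v))) ` FF"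
    proof
      fix x assume "x \<in> {x. probX FF X v x > 0}"
      hence p: "probX FF X v x > 0" by simp
      have "card {F \<in> FF. X v (restrict F (nbrs v)) = x} \<noteq> 0"
      proof
        assume "card {F \<in> FF. X v (restrict F (nbrs v)) = x} = 0"
        hence "probX FF X v x = 0" by (simp add: probX_def)
        with p show False by simp
      qed
      then obtain F where "F \<in> FF" "X v (restrict F (nbrs v)) = x"
        by (metis (mono_tags, lifting) Collect_empty_eq card.empty)
      thus "x \<in> (\<lambda>F. X v (restrict F (nbrs v))) ` FF" by auto
    qed
    thus ?thesis using finFF finite_subset by blast
  qed
  have fpos: "real (Zv Hs H v (PsiX FF X v x) (IX FF X v x)) / probX FF X v x > 0"
    if "v \<in> Od" "probX FF X v x > 0" for v x
    using zv_pos[OF finFF finHs hom, of v X x] that by (simp add: Od_def)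
  have gpos: "g v x > 0" if "v \<in> Od" "x \<in> {x. probX FF X v x > 0}" for v x
  proof -
    have "real (Zv Hs H v (PsiX FF X v x) (IX FF X v x)) / probX FF X v x > 0" using fpos that by simp
    thus ?thesis unfolding g_def by (metis powr_gt_zero less_irrefl)
  qed
  have innerpos: "inner v > 0" if "v \<in> Od" for v
    unfolding inner_def by (rule prod_pos) (rule gpos[OF that])
  have P1pos: "P1 > 0" unfolding P1_def
    by (rule prod_pos) (rule innerpos)
  have P2pos: "P2 > 0" unfolding P2_def
    by (rule prod_pos) (use Hupos in simp)
  have lng: "ln (g v x) = probX FF X v x * ln (real (Zv Hs H v (PsiX FF X v x) (IX FF X v x)) / probX FF X v x) / D" for v x
    by (simp add: g_def)
  have lninner: "ln (inner v) = Loc v / D" if v: "v \<in> Od" for v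
  proof -
    have "ln (inner v) = (\<Sum>x \<in> {x. probX FF X v x > 0}. ln (g v x))"
      unfolding inner_def
    proof (rule ln_prod[OF finX])
      fix x assume "x \<in> {x. probX FF X v x > 0}"
      from gpos[OF v this] show "g v x \<noteq> 0" by linarith
    qed
    also have "\<dots> = Loc v / D" unfolding lng Loc_def by (rule sum_divide_distrib[symmetric])
    finally show ?thesis .
  qed
  have lnP1: "ln P1 = A / D"
  proof -
    have "ln P1 = (\<Sum>v\<in>Od. ln (inner v))"
      unfolding P1_def
    proof (rule ln_prod[OF finOd])
      fix v assume "v \<in> Od"
      from innerpos[OF this] show "inner v \<noteq> 0" by linarith
    qed
    also have "\<dots> = (\<Sum>v\<in>Od. Loc v / D)" by (rule sum.cong[OF refl]) (rule lninner)
    also have "\<dots> = A / D" unfolding A_def by (rule sum_divide_distrib[symmetric])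
    finally show ?thesis .
  qed
  have lnP2: "ln P2 = B / D"
  proof -
    have "ln P2 = (\<Sum>u\<in>bd. ln (real (card (Hu u)) powr (b u / D)))"
      unfolding P2_def
    proof (rule ln_prod[OF finbd])
      fix u assume "u \<in> bd"
      from Hupos[OF this] show "real (card (Hu u)) powr (b u / D) \<noteq> 0" by simp
    qed
    also have "\<dots> = (\<Sum>u\<in>bd. b u * ln (real (card (Hu u))) / D)" by simp
    also have "\<dots> = B / D" unfolding B_def by (rule sum_divide_distrib[symmetric])
    finally show ?thesis .
  qed
  have "ln N \<le> ln (P1 * P2)"
    using lnN P1pos P2pos by (simp add: ln_mult lnP1 lnP2)
  hence "N \<le> P1 * P2" using Npos P1pos P2pos by simp
  thus ?thesis unfolding N_def P1_def P2_def D_def Od_def bd_def b_def inner_def g_def .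
qed

end
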